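(* Let $p_1, p_2, \ldots, p_m$ ($m \geq 1$) be distinct primes and $n = p_1 p_2 \cdots p_m$. Then the non-nilradical graph $\Omega(\mathbb{Z}_n)$ is very cost effective.
   Context: $\mathbb{Z}_n$ is the ring of residue classes modulo $n$. The non-nilradical graph $\Omega(\mathbb{Z}_n)$ has as vertices the non-nilpotent zero-divisors of $\mathbb{Z}_n$, two distinct vertices being adjacent iff their product is $0$. For a graph $G=(V,E)$ and $S\subseteq V$, a vertex $v\in S$ is very cost effective if $|N(v)\cap S| < |N(v)\cap (V\setminus S)|$; $S$ is very cost effective if every vertex of $S$ is. A bipartition $\{S, V\setminus S\}$ is very cost effective if both parts are very cost effective, and $G$ is very cost effective if it has a very cost effective bipartition. *)

theory Defs
  imports "HOL-Computational_Algebra.Primes"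
begin

definition zn_carrier :: "nat \<Rightarrow> nat set" where
  "zn_carrier n = {0..<n}"

definition zn_zero_divisor :: "nat \<Rightarrow> nat \<Rightarrow> bool" where
  "zn_zero_divisor n x \<longleftrightarrow> x \<in> zn_carrier n \<and>
     (\<exists>y \<in> zn_carrier n. y \<noteq> 0 \<and> (x * y) mod n = 0)"

definition zn_nilpotent :: "nat \<Rightarrow> nat \<Rightarrow> bool" where
  "zn_nilpotent n x \<longleftrightarrow> x \<in> zn_carrier n \<and> (\<exists>k::nat. k \<ge> 1 \<and> (x ^ k) mod n = 0)"

definition Omega_vertices :: "nat \<Rightarrow> nat set" where
  "Omega_vertices n = {x \<in> zn_carrier n. zn_zero_divisor n x \<and> \<not> zn_nilpotent n x}"

definition Omega_adj :: "nat \<Rightarrow> nat \<Rightarrow> nat \<Rightarrow> bool" where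
  "Omega_adj n x y \<longleftrightarrow> x \<noteq> y \<and> (x * y) mod n = 0"

definition nbhd :: "'a set \<Rightarrow> ('a \<Rightarrow> 'a \<Rightarrow> bool) \<Rightarrow> 'a \<Rightarrow> 'a set" where
  "nbhd V adj v = {u \<in> V. u \<noteq> v \<and> adj v u}"

definition very_cost_effective_vertex ::
  "'a set \<Rightarrow> ('a \<Rightarrow> 'a \<Rightarrow> bool) \<Rightarrow> 'a set \<Rightarrow> 'a \<Rightarrow> bool" where
  "very_cost_effective_vertex V adj S v \<longleftrightarrow>
     card (nbhd V adj v \<inter> S) < card (nbhd V adj v \<inter> (V - S))"

definition very_cost_effective_set ::
  "'a set \<Rightarrow> ('a \<Rightarrow> 'a \<Rightarrow> bool) \<Rightarrow> 'a set \<Rightarrow> bool" where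
  "very_cost_effective_set V adj S \<longleftrightarrow>
     S \<subseteq> V \<and> (\<forall>v \<in> S. very_cost_effective_vertex V adj S v)"

definition very_cost_effective_bipartition ::
  "'a set \<Rightarrow> ('a \<Rightarrow> 'a \<Rightarrow> bool) \<Rightarrow> 'a set \<Rightarrow> bool" where
  "very_cost_effective_bipartition V adj S \<longleftrightarrow>
     S \<subseteq> V \<and> very_cost_effective_set V adj S \<and> very_cost_effective_set V adj (V - S)"

definition very_cost_effective_graph ::
  "'a set \<Rightarrow> ('a \<Rightarrow> 'a \<Rightarrow> bool) \<Rightarrow> bool" where
  "very_cost_effective_graph V adj \<longleftrightarrow> (\<exists>S. very_cost_effective_bipartition V adj S)"

end

theory Submission
  imports Defs
begin

lemma not_dvd_prod_list:
  fixes a :: nat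
  assumes "prime a" "a \<notin> set rs" "\<forall>r\<in>set rs. prime r"
  shows "\<not> a dvd prod_list rs"
  using assms
proof (induction rs)
  case Nil
  then show ?case using not_prime_1 by auto
next
  case (Cons b rs)
  show ?case
  proof
    assume "a dvd prod_list (b # rs)"
    then have "a dvd b \<or> a dvd prod_list rs"
      using Cons.prems(1) by (simp add: prime_dvd_mult_iff)
    moreover have "\<not> a dvd b"
      using Cons.prems primes_dvd_imp_eq by auto
    ultimately show False using Cons by auto
  qed
qed

lemma prod_list_dvd:
  fixes z :: nat
  assumes "distinct rs" "\<forall>r\<in>set rs. prime r" "\<forall>r\<in>set rs. r dvd z"
  shows "prod_list rs dvd z"
  using assms
proof (induction rs)
  case Nil
  then show ?case by simp
next
  case (Cons b rs)
  have "coprime b (prod_list rs)"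
    using Cons.prems not_dvd_prod_list[of b rs] by (simp add: prime_imp_coprime)
  then show ?case using Cons divides_mult by auto
qed

lemma mem_dvd_prod_list:
  fixes rs :: "nat list"
  shows "r \<in> set rs \<Longrightarrow> r dvd prod_list rs"
  by (induction rs) auto

lemma prod_list_pos:
  fixes rs :: "nat list"
  assumes "\<forall>r\<in>set rs. prime r"
  shows "prod_list rs > 0"
  using assms by (induction rs) (auto simp: prime_gt_0_nat)

theorem mainTheorem7:
  fixes ps :: "nat list" and n :: nat
  assumes "m \<ge> 1" and "length ps = m" and "distinct ps" and "\<forall>p \<in> set ps. prime p"
    and "n = prod_list ps"
  shows "very_cost_effective_graph (Omega_vertices n) (Omega_adj n)"
proof -
  obtain p rs where ps: "ps = p # rs" using assms(1,2) by (cases ps) auto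
  define q where "q = prod_list rs"
  have pp: "prime p" using assms(4) ps by auto
  have p1: "p > 1" using pp prime_gt_1_nat by blast
  have q0: "q > 0" unfolding q_def using assms(4) ps prod_list_pos by auto
  have npq: "n = p * q" using assms(5) ps q_def by simp
  have pq: "\<not> p dvd q" unfolding q_def
    using not_dvd_prod_list[of p rs] pp assms(3,4) ps by auto
  have n0: "n > 0" using npq p1 q0 by simp
  have qn: "q < n" using npq p1 q0 by simp
  have pn: "p dvd n" using npq by simp
  define V where "V = Omega_vertices n"
  define adj where "adj = Omega_adj n"
  define S where "S = {x\<in>V. p dvd x}"
  have Vsub: "V \<subseteq> {0..<n}" unfolding V_def Omega_vertices_def zn_carrier_def by auto
  have finV: "finite V" using Vsub finite_subset by blast
  have vert_nz: "x \<noteq> 0" if "x \<in> V" for x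
    using that unfolding V_def Omega_vertices_def zn_nilpotent_def zn_carrier_def by force
  have mkvert: "y \<in> V" if "y < n" "\<not> p dvd y" "w < n" "w \<noteq> 0" "(y * w) mod n = 0" for y w
  proof -
    have "zn_zero_divisor n y" unfolding zn_zero_divisor_def zn_carrier_def using that by auto
    moreover have "\<not> zn_nilpotent n y"
    proof
      assume "zn_nilpotent n y"
      then obtain k where "k \<ge> 1" "(y ^ k) mod n = 0" unfolding zn_nilpotent_def by auto
      then have "p dvd y ^ k" using pn by (meson dvd_trans mod_0_imp_dvd)
      then have "p dvd y" using pp prime_dvd_power_nat by blast
      then show False using that by simp
    qed
    ultimately show ?thesis unfolding V_def Omega_vertices_def zn_carrier_def using that by auto
  qed
  have nb: "nbhd V adj x = {u\<in>V. u \<noteq> x \<and> (x * u) mod n = 0}" for x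
    unfolding nbhd_def adj_def Omega_adj_def by auto
  have VS: "V - S = {x\<in>V. \<not> p dvd x}" unfolding S_def by auto
  have inS: "very_cost_effective_vertex V adj S x" if xS: "x \<in> S" for x
  proof -
    have xV: "x \<in> V" and px: "p dvd x" using xS S_def by auto
    have xn: "x < n" using xV Vsub by auto
    have x0: "x \<noteq> 0" using vert_nz xV by blast
    define A where "A = nbhd V adj x \<inter> S"
    define B where "B = nbhd V adj x \<inter> (V - S)"
    define f where "f = (\<lambda>y. (y + q) mod n)"
    have fmod: "(y + q) mod n = (if y + q < n then y + q else y + q - n)" if "y < n" for y
      using that qn by (simp add: le_mod_geq)
    have xq: "n dvd x * q" using px npq by auto
    have fB: "f y \<in> B" if "y \<in> A" for y
    proof -
      have yV: "y \<in> V" and py: "p dvd y" and xy: "(x * y) mod n = 0"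
        using that unfolding A_def S_def nb by auto
      have "\<not> p dvd f y"
      proof
        assume "p dvd f y"
        then have "p dvd y + q" unfolding f_def using pn
          by (metis dvd_mod_iff)
        then show False using py pq by (simp add: dvd_add_right_iff)
      qed
      moreover have fn: "f y < n" unfolding f_def using n0 by simp
      moreover have "(f y * x) mod n = 0"
      proof -
        have "n dvd x * y" using xy by auto
        then have "n dvd x * (y + q)" using xq by (simp add: distrib_left)
        moreover have "(x * f y) mod n = (x * (y + q)) mod n" unfolding f_def by (rule mod_mult_right_eq)
        ultimately have "(x * f y) mod n = 0" by simp
        then show ?thesis by (simp add: mult.commute)
      qed
      ultimately have "f y \<in> V" using mkvert[of "f y" x] xn x0 by auto
      moreover have "f y \<noteq> x" using px \<open>\<not> p dvd f y\<close> by auto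
      moreover have "(x * f y) mod n = 0" using \<open>(f y * x) mod n = 0\<close> by (simp add: mult.commute)
      ultimately show ?thesis unfolding B_def nb VS using \<open>\<not> p dvd f y\<close> by auto
    qed
    have injf: "inj_on f A"
    proof
      fix y1 y2 assume "y1 \<in> A" "y2 \<in> A" "f y1 = f y2"
      then have "y1 < n" "y2 < n" using Vsub unfolding A_def nb by auto
      then show "y1 = y2" using \<open>f y1 = f y2\<close> unfolding f_def
        using fmod[of y1] fmod[of y2] by (auto split: if_splits)
    qed
    have qB: "q \<in> B"
    proof -
      have "q \<in> V" using mkvert[of q x] qn pq xn x0 xq by (simp add: mult.commute dvd_eq_mod_eq_0)
      moreover have "q \<noteq> x" using px pq by auto
      ultimately show ?thesis unfolding B_def nb VS using xq pq by auto
    qed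
    have qnot: "q \<notin> f ` A"
    proof
      assume "q \<in> f ` A"
      then obtain y where yA: "y \<in> A" and "(y + q) mod n = q" unfolding f_def by auto
      have yn: "y < n" and y0: "y \<noteq> 0" using yA Vsub vert_nz unfolding A_def nb by auto
      show False
      proof (cases "y + q < n")
        case True
        then show False using \<open>(y + q) mod n = q\<close> y0 by simp
      next
        case False
        then have "(y + q) mod n = y + q - n" using yn qn
          by (simp add: le_mod_geq)
        then show False using \<open>(y + q) mod n = q\<close> yn False by linarith
      qed
    qed
    have finB: "finite B" unfolding B_def using finV by auto
    have "f ` A \<subset> B" using fB qB qnot by blast
    then have "card (f ` A) < card B" using finB psubset_card_mono by blast
    then have "card A < card B" using card_image injf by metis
    then show ?thesis unfolding very_cost_effective_vertex_def A_def B_def .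
  qed
  have notS: "very_cost_effective_vertex V adj (V - S) x" if xS: "x \<in> V - S" for x
  proof -
    have xV: "x \<in> V" and px: "\<not> p dvd x" using xS S_def by auto
    have empty: "nbhd V adj x \<inter> (V - S) = {}"
    proof (rule ccontr)
      assume "nbhd V adj x \<inter> (V - S) \<noteq> {}"
      then obtain y where "y \<in> nbhd V adj x \<inter> (V - S)" by blast
      then have "y \<in> V" "\<not> p dvd y" "(x * y) mod n = 0" unfolding nb VS by auto
      then have "p dvd x * y" using pn by (meson dvd_trans mod_0_imp_dvd)
      then show False using pp px \<open>\<not> p dvd y\<close> prime_dvd_mult_iff by blast
    qed
    have "V - (V - S) = S" unfolding S_def by auto
    obtain z where zn: "z < n" and z0: "z \<noteq> 0" and xz: "(x * z) mod n = 0"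
      using xV unfolding V_def Omega_vertices_def zn_zero_divisor_def zn_carrier_def by auto
    have pz: "p dvd z"
    proof -
      have "p dvd x * z" using xz pn by (meson dvd_trans mod_0_imp_dvd)
      then show ?thesis using pp px prime_dvd_mult_iff by blast
    qed
    have x0: "x \<noteq> 0" using vert_nz xV by blast
    have xn: "x < n" using xV Vsub by auto
    have zV: "z \<in> V"
    proof -
      have "zn_zero_divisor n z" unfolding zn_zero_divisor_def zn_carrier_def
        using zn x0 xn xz by (auto simp: mult.commute)
      moreover have "\<not> zn_nilpotent n z"
      proof
        assume "zn_nilpotent n z"
        then obtain k where "k \<ge> 1" "(z ^ k) mod n = 0" unfolding zn_nilpotent_def by auto
        have "\<forall>r\<in>set ps. r dvd z"
        proof
          fix r assume r: "r \<in> set ps"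
          have "r dvd n" using r assms(5) by (simp add: mem_dvd_prod_list)
          then have "r dvd z ^ k" using \<open>(z ^ k) mod n = 0\<close> by (meson dvd_trans mod_0_imp_dvd)
          then show "r dvd z" using assms(4) r prime_dvd_power_nat by blast
        qed
        then have "n dvd z" using prod_list_dvd assms by auto
        then show False using zn z0 by (simp add: nat_dvd_not_less)
      qed
      ultimately show ?thesis unfolding V_def Omega_vertices_def zn_carrier_def using zn by auto
    qed
    have "z \<in> nbhd V adj x \<inter> (V - (V - S))"
      using zV pz px xz unfolding nb S_def by auto
    then have "card (nbhd V adj x \<inter> (V - (V - S))) > 0"
    proof -
      have "nbhd V adj x \<inter> (V - (V - S)) \<subseteq> V" unfolding nbhd_def by auto
      then have "finite (nbhd V adj x \<inter> (V - (V - S)))" using finV finite_subset by blast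
      then show ?thesis using \<open>z \<in> nbhd V adj x \<inter> (V - (V - S))\<close> card_gt_0_iff by blast
    qed
    then show ?thesis unfolding very_cost_effective_vertex_def using empty by simp
  qed
  have "very_cost_effective_bipartition V adj S"
    unfolding very_cost_effective_bipartition_def very_cost_effective_set_def
    using inS notS S_def by auto
  then show ?thesis unfolding very_cost_effective_graph_def V_def adj_def by blast
qed

end
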